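(* Let $(X,T)$ be a compact Hausdorff flow such that every point of $X$ is almost automorphic. Then the enveloping semigroup $\mathcal E(X,T)$ is a group, and the group inversion $g\mapsto g^{-1}$ is a continuous map from $\mathcal E(X,T)$ onto $\mathcal E(X,T)$ with respect to the product topology on $X^X$.
   Context: $X$ compact Hausdorff, $T$ a topological group acting continuously on $X$. A point $x$ is almost automorphic if for every net $\{t_i\}\subset T$ with $t_ix\to y$ it holds that $t_i^{-1}y\to x$. The enveloping semigroup $\mathcal E(X,T)$ is the closure of $T$ in $X^X$ with the product topology, with composition as operation. *)

theory Defs
  imports "HOL-Analysis.Analysis" "HOL-Algebra.Group"
begin

text \<open>A continuous action of a topological group (written additively, group_add is
  not necessarily commutative) on a topological space.\<close>
definition continuous_group_action :: "('g::topological_group_add \<Rightarrow> 'x::topological_space \<Rightarrow> 'x) \<Rightarrow> bool" where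
  "continuous_group_action act \<longleftrightarrow>
     act 0 = id \<and> (\<forall>g h x. act (g + h) x = act g (act h x)) \<and>
     continuous_on UNIV (\<lambda>(g, x). act g x)"

text \<open>Almost automorphic point. Nets are represented by filters: a net (t_i) in T
  corresponds to the image filter on T, and convergence of t_i x and of t_i^{-1} y
  is convergence along that filter.\<close>
definition almost_automorphic :: "('g::group_add \<Rightarrow> 'x::topological_space \<Rightarrow> 'x) \<Rightarrow> 'x \<Rightarrow> bool" where
  "almost_automorphic act x \<longleftrightarrow>
     (\<forall>(F::'g filter) y. ((\<lambda>t. act t x) \<longlongrightarrow> y) F \<longrightarrow> ((\<lambda>t. act (- t) y) \<longlongrightarrow> x) F)"

definition enveloping_semigroup :: "('g \<Rightarrow> 'x::topological_space \<Rightarrow> 'x) \<Rightarrow> ('x \<Rightarrow> 'x) set" where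
  "enveloping_semigroup act = closure (range act)"

definition enveloping_monoid :: "('g \<Rightarrow> 'x::topological_space \<Rightarrow> 'x) \<Rightarrow> ('x \<Rightarrow> 'x) monoid" where
  "enveloping_monoid act = \<lparr>carrier = enveloping_semigroup act, mult = (\<circ>), one = id\<rparr>"

end

theory Submission
  imports Defs
begin

lemma Hausdorff_t2: "Hausdorff_space (euclidean :: ('a::t2_space) topology)"
  unfolding Hausdorff_space_def
  by (metis disjnt_def open_openin separation_t2)

lemma Hausdorff_fun: "Hausdorff_space (euclidean :: ('a \<Rightarrow> 'b::t2_space) topology)"
  by (metis Hausdorff_space_product_topology Hausdorff_t2 euclidean_product_topology)

lemma compact_imp_closed_fun:
  fixes S :: "('a \<Rightarrow> 'b::t2_space) set"
  assumes "compact S" shows "closed S"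
  using compactin_imp_closedin[OF Hausdorff_fun] assms
  by (metis closed_closedin compactin_euclidean_iff)

lemma compact_UNIV_fun:
  assumes "compact (UNIV :: 'b::topological_space set)"
  shows "compact (UNIV :: ('a \<Rightarrow> 'b) set)"
proof -
  have "compact_space (euclidean :: 'b topology)"
    using assms by (simp add: compact_space_def)
  then have "compact_space (product_topology (\<lambda>i::'a. euclidean :: 'b topology) UNIV)"
    by (simp add: compact_space_product_topology)
  then show ?thesis
    by (simp add: euclidean_product_topology compact_space_def)
qed

lemma tendsto_fun_iff:
  fixes f :: "'c \<Rightarrow> 'a \<Rightarrow> 'b::topological_space"
  shows "(f \<longlongrightarrow> l) F \<longleftrightarrow> (\<forall>i. ((\<lambda>x. f x i) \<longlongrightarrow> l i) F)"
proof -
  have "(f \<longlongrightarrow> l) F \<longleftrightarrow> limitin (product_topology (\<lambda>i. euclidean) UNIV) f l F"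
    by (simp add: euclidean_product_topology)
  also have "\<dots> \<longleftrightarrow> (\<forall>i. ((\<lambda>x. f x i) \<longlongrightarrow> l i) F)"
    by (simp add: limitin_componentwise)
  finally show ?thesis .
qed

theorem mainTheorem3:
  fixes act :: "'g::topological_group_add \<Rightarrow> 'x::t2_space \<Rightarrow> 'x"
  assumes "compact (UNIV :: 'x set)"
    and "continuous_group_action act"
    and "\<forall>x. almost_automorphic act x"
  shows "group (enveloping_monoid act)
    \<and> continuous_on (enveloping_semigroup act) (\<lambda>f. inv\<^bsub>enveloping_monoid act\<^esub> f)
    \<and> (\<lambda>f. inv\<^bsub>enveloping_monoid act\<^esub> f) ` enveloping_semigroup act = enveloping_semigroup act"
proof -
  define E where "E = enveloping_semigroup act"
  define G where "G = enveloping_monoid act"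
  define P where "P = (\<lambda>t. (act t, act (- t)))"
  define K where "K = closure (range P)"
  have carrG: "carrier G = E" and multG: "\<And>a b. a \<otimes>\<^bsub>G\<^esub> b = a \<circ> b" and oneG: "\<one>\<^bsub>G\<^esub> = id"
    by (simp_all add: G_def E_def enveloping_monoid_def)
  have E_def': "E = closure (range act)" by (simp add: E_def enveloping_semigroup_def)
  have closedE: "closed E" by (simp add: E_def')
  have act0: "act 0 = id" and actadd: "\<And>s t x. act (s + t) x = act s (act t x)"
    and actcont: "continuous_on UNIV (\<lambda>(g, x). act g x)"
    using assms(2) by (auto simp: continuous_group_action_def)
  have aa: "\<And>x F y. ((\<lambda>t. act t x) \<longlongrightarrow> y) F \<Longrightarrow> ((\<lambda>t. act (- t) y) \<longlongrightarrow> x) F"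
    using assms(3) by (auto simp: almost_automorphic_def)
  have contt: "continuous_on UNIV (act t)" for t
  proof -
    have "continuous_on UNIV ((\<lambda>(g, x). act g x) \<circ> (\<lambda>x. (t, x)))"
      by (rule continuous_on_compose) (auto intro!: continuous_intros continuous_on_subset[OF actcont])
    then show ?thesis by (simp add: o_def)
  qed
  have compfun: "compact (UNIV :: ('x \<Rightarrow> 'x) set)"
    using compact_UNIV_fun[OF assms(1)] .
  have compK: "compact K"
  proof -
    have "compact (UNIV \<times> UNIV :: (('x \<Rightarrow> 'x) \<times> ('x \<Rightarrow> 'x)) set)"
      using compact_Times[OF compfun compfun] .
    then have "compact (UNIV :: (('x \<Rightarrow> 'x) \<times> ('x \<Rightarrow> 'x)) set)" by simp
    then show ?thesis using compact_Int_closed[of UNIV K] by (simp add: K_def)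
  qed
  have graph: "g \<circ> f = id \<and> f \<circ> g = id" if fg: "(f, g) \<in> K" for f g
  proof -
    define F where "F = filtercomap P (nhds (f, g))"
    have Fne: "F \<noteq> bot"
      unfolding F_def
    proof (rule filtercomap_neq_bot)
      fix Q assume "eventually Q (nhds (f, g))"
      then obtain S where S: "open S" "(f, g) \<in> S" "\<forall>z\<in>S. Q z"
        by (auto simp: eventually_nhds)
      then have "S \<inter> range P \<noteq> {}"
        using fg unfolding K_def by (metis open_Int_closure_eq_empty empty_iff IntI)
      then show "\<exists>t. Q (P t)" using S by auto
    qed
    have PF: "(P \<longlongrightarrow> (f, g)) F" unfolding F_def by (rule filterlim_filtercomap)
    have Ff: "(act \<longlongrightarrow> f) F"
      using tendsto_fst[OF PF] by (simp add: P_def)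
    have Fg: "((\<lambda>t. act (- t)) \<longlongrightarrow> g) F"
      using tendsto_snd[OF PF] by (simp add: P_def)
    have Ffx: "((\<lambda>t. act t x) \<longlongrightarrow> f x) F" for x
      using Ff tendsto_fun_iff by metis
    have Fgx: "((\<lambda>t. act (- t) x) \<longlongrightarrow> g x) F" for x
      using Fg tendsto_fun_iff[of "\<lambda>t. act (- t)"] by metis
    have 1: "g (f x) = x" for x
      using tendsto_unique[OF Fne Fgx aa[OF Ffx]] .
    have 2: "f (g y) = y" for y
    proof -
      define F' where "F' = filtermap uminus F"
      have F'ne: "F' \<noteq> bot" using Fne by (simp add: F'_def filtermap_bot_iff)
      have "((\<lambda>s. act s y) \<longlongrightarrow> g y) F'"
        unfolding F'_def filterlim_filtermap using Fgx by (simp add: o_def)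
      then have "((\<lambda>s. act (- s) (g y)) \<longlongrightarrow> y) F'" by (rule aa)
      then have "((\<lambda>t. act t (g y)) \<longlongrightarrow> y) F"
        unfolding F'_def filterlim_filtermap by simp
      then show ?thesis using tendsto_unique[OF Fne Ffx] by metis
    qed
    show ?thesis using 1 2 by (auto simp: fun_eq_iff)
  qed
  have sndK: "snd ` K \<subseteq> E"
    unfolding K_def
  proof (rule image_closure_subset[OF continuous_on_snd[OF continuous_on_id] closedE])
    show "snd ` range P \<subseteq> E"
    proof
      fix h assume "h \<in> snd ` range P"
      then obtain t where "h = act (- t)" by (auto simp: P_def)
      then show "h \<in> E" unfolding E_def' using closure_subset[of "range act"] by blast
    qed
  qed
  have fstK: "fst ` K \<subseteq> E"
    unfolding K_def
  proof (rule image_closure_subset[OF continuous_on_fst[OF continuous_on_id] closedE])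
    show "fst ` range P \<subseteq> E"
    proof
      fix h assume "h \<in> fst ` range P"
      then obtain t where "h = act t" by (auto simp: P_def)
      then show "h \<in> E" unfolding E_def' using closure_subset[of "range act"] by blast
    qed
  qed
  have fstK2: "E \<subseteq> fst ` K"
  proof -
    have "compact (fst ` K)" by (rule compact_continuous_image[OF continuous_on_fst[OF continuous_on_id] compK])
    then have "closed (fst ` K)" by (rule compact_imp_closed_fun)
    moreover have "range act \<subseteq> fst ` K"
    proof
      fix h assume "h \<in> range act"
      then obtain t where "h = act t" by auto
      then have "(h, act (- t)) \<in> K" unfolding K_def P_def using closure_subset[of "range (\<lambda>t. (act t, act (- t)))"] by blast
      then show "h \<in> fst ` K" by force
    qed
    ultimately show ?thesis unfolding E_def' by (rule closure_minimal[rotated])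
  qed
  have step1: "act t \<circ> h \<in> E" if "h \<in> E" for t h
  proof -
    have "(\<lambda>h. act t \<circ> h) ` closure (range act) \<subseteq> E"
    proof (rule image_closure_subset)
      show "continuous_on (closure (range act)) (\<lambda>h. act t \<circ> h)"
        unfolding o_def
      proof (rule continuous_on_coordinatewise_then_product)
        fix i
        show "continuous_on (closure (range act)) (\<lambda>h. act t (h i))"
          by (rule continuous_on_compose2[OF contt continuous_on_subset[OF continuous_on_product_coordinates]]) auto
      qed
      show "(\<lambda>h. act t \<circ> h) ` range act \<subseteq> E"
      proof
        fix k assume "k \<in> (\<lambda>h. act t \<circ> h) ` range act"
        then obtain s where "k = act t \<circ> act s" by auto
        then have "k = act (t + s)" by (auto simp: fun_eq_iff actadd)
        then show "k \<in> E" unfolding E_def' using closure_subset[of "range act"] by blast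
      qed
    qed (rule closedE)
    then show ?thesis using that E_def' by auto
  qed
  have compE: "f \<circ> h \<in> E" if "f \<in> E" "h \<in> E" for f h
  proof -
    have "(\<lambda>f. f \<circ> h) ` closure (range act) \<subseteq> E"
    proof (rule image_closure_subset)
      show "continuous_on (closure (range act)) (\<lambda>f. f \<circ> h)"
        unfolding o_def
      proof (rule continuous_on_coordinatewise_then_product)
        fix i
        show "continuous_on (closure (range act)) (\<lambda>f. f (h i))"
          by (rule continuous_on_subset[OF continuous_on_product_coordinates]) auto
      qed
      show "(\<lambda>f. f \<circ> h) ` range act \<subseteq> E" using step1[OF that(2)] by auto
    qed (rule closedE)
    then show ?thesis using that E_def' by auto
  qed
  have idE: "id \<in> E" unfolding E_def' by (rule closure_subset[THEN subsetD]) (simp add: act0[symmetric])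
  have grp: "group G"
  proof (rule groupI)
    fix x assume "x \<in> carrier G"
    then have "x \<in> E" by (simp add: carrG)
    then obtain y where "(x, y) \<in> K" using fstK2 by force
    then show "\<exists>y\<in>carrier G. y \<otimes>\<^bsub>G\<^esub> x = \<one>\<^bsub>G\<^esub>"
      using graph sndK carrG multG oneG by force
  qed (auto simp: carrG multG oneG compE idE o_assoc)
  have invK: "(f, g) \<in> K \<Longrightarrow> f \<in> E \<and> g = inv\<^bsub>G\<^esub> f" for f g
  proof -
    assume fg: "(f, g) \<in> K"
    have "f \<in> fst ` K" using fg by (rule rev_image_eqI) simp
    then have fE: "f \<in> E" using fstK by blast
    have "g \<in> snd ` K" using fg by (rule rev_image_eqI) simp
    then have gE: "g \<in> E" using sndK by blast
    have "g \<otimes>\<^bsub>G\<^esub> f = \<one>\<^bsub>G\<^esub>" using graph[OF fg] by (simp add: multG oneG)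
    then have "inv\<^bsub>G\<^esub> f = g" using group.inv_equality[OF grp] fE gE carrG by blast
    then show ?thesis using fE by simp
  qed
  have Kinv: "(f, inv\<^bsub>G\<^esub> f) \<in> K" if fE: "f \<in> E" for f
  proof -
    obtain p where p: "p \<in> K" "f = fst p" using fstK2 fE by blast
    then obtain g where fg: "(f, g) \<in> K" by (metis prod.collapse)
    then show ?thesis using invK[OF fg] by simp
  qed
  have cont: "continuous_on E (\<lambda>f. inv\<^bsub>G\<^esub> f)"
    unfolding continuous_on_closed_vimage[OF closedE]
  proof (intro allI impI)
    fix B :: "('x \<Rightarrow> 'x) set" assume B: "closed B"
    have eq: "(\<lambda>f. inv\<^bsub>G\<^esub> f) -` B \<inter> E = fst ` (K \<inter> (UNIV \<times> B))"
    proof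
      show "(\<lambda>f. inv\<^bsub>G\<^esub> f) -` B \<inter> E \<subseteq> fst ` (K \<inter> (UNIV \<times> B))"
      proof
        fix f assume f: "f \<in> (\<lambda>f. inv\<^bsub>G\<^esub> f) -` B \<inter> E"
        then have "(f, inv\<^bsub>G\<^esub> f) \<in> K \<inter> (UNIV \<times> B)" using Kinv by blast
        then show "f \<in> fst ` (K \<inter> (UNIV \<times> B))" by (rule rev_image_eqI) simp
      qed
      show "fst ` (K \<inter> (UNIV \<times> B)) \<subseteq> (\<lambda>f. inv\<^bsub>G\<^esub> f) -` B \<inter> E"
      proof
        fix f assume "f \<in> fst ` (K \<inter> (UNIV \<times> B))"
        then obtain g where "(f, g) \<in> K" "g \<in> B" by force
        then show "f \<in> (\<lambda>f. inv\<^bsub>G\<^esub> f) -` B \<inter> E" using invK by blast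
      qed
    qed
    have "compact (K \<inter> (UNIV \<times> B))" using compK B by (simp add: compact_Int_closed closed_Times)
    then have "compact (fst ` (K \<inter> (UNIV \<times> B)))"
      by (rule compact_continuous_image[OF continuous_on_fst[OF continuous_on_id]])
    then show "closed ((\<lambda>f. inv\<^bsub>G\<^esub> f) -` B \<inter> E)" unfolding eq by (rule compact_imp_closed_fun)
  qed
  have img: "(\<lambda>f. inv\<^bsub>G\<^esub> f) ` E = E"
  proof
    show "(\<lambda>f. inv\<^bsub>G\<^esub> f) ` E \<subseteq> E" using group.inv_closed[OF grp] carrG by auto
    show "E \<subseteq> (\<lambda>f. inv\<^bsub>G\<^esub> f) ` E"
    proof
      fix f assume "f \<in> E"
      then have "f = inv\<^bsub>G\<^esub> (inv\<^bsub>G\<^esub> f)" "inv\<^bsub>G\<^esub> f \<in> E"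
        using group.inv_inv[OF grp] group.inv_closed[OF grp] carrG by auto
      then show "f \<in> (\<lambda>f. inv\<^bsub>G\<^esub> f) ` E" by blast
    qed
  qed
  show ?thesis using grp cont img by (simp add: G_def E_def)
qed

end
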